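(* For every $R>0$, the set $\mathcal P^\star_R$ of $R$-special measures is closed in $\mathcal P(C([0,T],\mathbb R^D))$ under weak convergence (and therefore also under the Wasserstein $L^1$ metric).
   Context: Fix $T>0$, integers $L\ge3$, $D_0,\dots,D_L\ge1$, $D=\sum_\ell D_\ell$; write $a\in\mathbb R^D$ as $(a^{(0)},\dots,a^{(L)})$ with $a^{(\ell)}\in\mathbb R^{D_\ell}$. Fix probability measures $\mu_0^{(\ell)}\in\mathcal P(\mathbb R^{D_\ell})$ with finite first moment and let $\mu_0=\prod_{\ell=0}^L\mu_0^{(\ell)}$. $C([0,T],\mathbb R^D)$ carries the sup norm. $\mathcal P_R$: the set of $\nu_{[0,T]}\in\mathcal P(C([0,T],\mathbb R^D))$ such that, if $\Theta\sim\nu_{[0,T]}$, then (1) $\Theta(0)\sim\mu_0$; (2) the coordinate trajectories $\Theta^{(0)}$ and $\Theta^{(L)}$ are a.s. constant in time; (3) each $\Theta^{(\ell)}$ is $R$-Lipschitz in time. $R$-special function: $F:\mathbb R^{D_{L-1}}\times\mathbb R^{D_L}\to C([0,T],\mathbb R^{D_{L-1}})$ such that (1) for each $a=(a^{(L-1)},a^{(L)})$, $t\mapsto F(a)(t)$ is $R$-Lipschitz and $F(a)(0)=a^{(L-1)}$; (2) for each $t\in[0,T]$, $a\mapsto F(a)(t)$ is $e^{Rt}$-Lipschitz. $R$-special measure: $\mu_{[0,T]}\in\mathcal P_R$ for which there is an $R$-special function $F_\mu$ such that, if $\Theta\sim\mu_{[0,T]}$, then a.s. for all $t\in[0,T]$,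 $\Theta^{(L-1)}(t)=F_\mu(\Theta^{(L-1)}(0),\Theta^{(L)}(0))(t)$. $\mathcal P^\star_R$ is the set of $R$-special measures. *)

theory Defs
  imports "HOL-Analysis.Analysis" "HOL-Probability.Probability"
begin

text \<open>Coordinates of R^D are indexed by a finite type 'n; the map blk assigns each
coordinate to its block number in 0..L.  The block R^{D_l} is identified with the
coordinate subspace of vectors vanishing outside the block.\<close>

definition blockset :: "('n \<Rightarrow> nat) \<Rightarrow> nat \<Rightarrow> 'n set" where
  "blockset blk l = {i. blk i = l}"

definition bproj :: "'n set \<Rightarrow> real^'n \<Rightarrow> real^'n" where
  "bproj S x = (\<chi> i. if i \<in> S then x $ i else 0)"

definition init_block_measure :: "('n::finite \<Rightarrow> nat) \<Rightarrow> nat \<Rightarrow> (real^'n) measure \<Rightarrow> bool" where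
  "init_block_measure blk l \<mu> \<longleftrightarrow>
     prob_space \<mu> \<and> sets \<mu> = sets borel \<and>
     (AE x in \<mu>. bproj (blockset blk l) x = x) \<and>
     integrable \<mu> (\<lambda>x. norm x)"

text \<open>mu0 = product of the mu0^(l), as a measure on R^D.\<close>
definition init_measure :: "nat \<Rightarrow> (nat \<Rightarrow> (real^'n::finite) measure) \<Rightarrow> (real^'n) measure" where
  "init_measure L \<mu>0b = distr (PiM {..L} \<mu>0b) borel (\<lambda>X. \<Sum>l\<le>L. X l)"

text \<open>C([0,T],R^D) is identified (isometrically, sup norm) with the bounded continuous
functions on the real line that are constant outside [0,T].\<close>
definition paths :: "real \<Rightarrow> (real \<Rightarrow>\<^sub>C 'a::metric_space) set" where
  "paths T = {\<Theta>. \<forall>t. apply_bcontfun \<Theta> t = apply_bcontfun \<Theta> (max 0 (min T t))}"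

definition path_prob_measure :: "real \<Rightarrow> (real \<Rightarrow>\<^sub>C 'a::metric_space) measure \<Rightarrow> bool" where
  "path_prob_measure T M \<longleftrightarrow>
     prob_space M \<and> sets M = sets borel \<and> (AE \<Theta> in M. \<Theta> \<in> paths T)"

definition weak_conv_paths ::
  "real \<Rightarrow> (nat \<Rightarrow> (real \<Rightarrow>\<^sub>C 'a::metric_space) measure) \<Rightarrow> (real \<Rightarrow>\<^sub>C 'a) measure \<Rightarrow> bool" where
  "weak_conv_paths T Ms M \<longleftrightarrow>
     (\<forall>f :: (real \<Rightarrow>\<^sub>C 'a) \<Rightarrow> real. continuous_on (paths T) f \<and> bounded (f ` paths T) \<longrightarrow>
        (\<lambda>n. (\<integral>\<Theta>\<in>paths T. f \<Theta> \<partial>Ms n)) \<longlonglongrightarrow> (\<integral>\<Theta>\<in>paths T. f \<Theta> \<partial>M))"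

definition in_PR ::
  "real \<Rightarrow> nat \<Rightarrow> ('n::finite \<Rightarrow> nat) \<Rightarrow> (nat \<Rightarrow> (real^'n) measure) \<Rightarrow> real
     \<Rightarrow> (real \<Rightarrow>\<^sub>C (real^'n)) measure \<Rightarrow> bool" where
  "in_PR T L blk \<mu>0b R M \<longleftrightarrow>
     path_prob_measure T M \<and>
     distr M borel (\<lambda>\<Theta>. apply_bcontfun \<Theta> 0) = init_measure L \<mu>0b \<and>
     (AE \<Theta> in M. \<forall>t\<in>{0..T}. \<forall>i. (blk i = 0 \<or> blk i = L) \<longrightarrow> apply_bcontfun \<Theta> t $ i = apply_bcontfun \<Theta> 0 $ i) \<and>
     (AE \<Theta> in M. \<forall>l\<le>L. \<forall>s\<in>{0..T}. \<forall>t\<in>{0..T}.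
        norm (bproj (blockset blk l) (apply_bcontfun \<Theta> t - apply_bcontfun \<Theta> s)) \<le> R * \<bar>t - s\<bar>)"

text \<open>R-special functions F : R^{D_{L-1}} x R^{D_L} -> C([0,T],R^{D_{L-1}}), encoded as
maps on R^D whose relevant input coordinates are the blocks L-1, L and whose relevant
output coordinates are block L-1 (condition (2) forces dependence only on those inputs).\<close>
definition special_function ::
  "real \<Rightarrow> nat \<Rightarrow> ('n::finite \<Rightarrow> nat) \<Rightarrow> real \<Rightarrow> (real^'n \<Rightarrow> real \<Rightarrow> real^'n) \<Rightarrow> bool" where
  "special_function T L blk R F \<longleftrightarrow>
     (\<forall>a. \<forall>s\<in>{0..T}. \<forall>t\<in>{0..T}.
        norm (bproj (blockset blk (L - 1)) (F a t - F a s)) \<le> R * \<bar>t - s\<bar>) \<and>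
     (\<forall>a. bproj (blockset blk (L - 1)) (F a 0) = bproj (blockset blk (L - 1)) a) \<and>
     (\<forall>t\<in>{0..T}. \<forall>a b.
        norm (bproj (blockset blk (L - 1)) (F a t - F b t))
          \<le> exp (R * t) * norm (bproj (blockset blk (L - 1) \<union> blockset blk L) (a - b)))"

definition special_measure ::
  "real \<Rightarrow> nat \<Rightarrow> ('n::finite \<Rightarrow> nat) \<Rightarrow> (nat \<Rightarrow> (real^'n) measure) \<Rightarrow> real
     \<Rightarrow> (real \<Rightarrow>\<^sub>C (real^'n)) measure \<Rightarrow> bool" where
  "special_measure T L blk \<mu>0b R M \<longleftrightarrow>
     in_PR T L blk \<mu>0b R M \<and>
     (\<exists>F. special_function T L blk R F \<and>
        (AE \<Theta> in M. \<forall>t\<in>{0..T}.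
           bproj (blockset blk (L - 1)) (apply_bcontfun \<Theta> t) = bproj (blockset blk (L - 1)) (F (apply_bcontfun \<Theta> 0) t)))"

end

theory Submission
  imports Defs "HOL-Complex_Analysis.Great_Picard"
begin


lemma bproj_diff: "bproj S (x - y) = bproj S x - bproj S y"
  by (simp add: bproj_def vec_eq_iff)

lemma bproj_idem[simp]: "bproj S (bproj S x) = bproj S x"
  by (simp add: bproj_def vec_eq_iff)

lemma norm_bproj_le: "norm (bproj S (x::real^'n)) \<le> norm x"
  unfolding norm_vec_def
  by (rule L2_set_mono) (auto simp: bproj_def)

lemma bounded_linear_bproj: "bounded_linear (bproj S :: real^'n \<Rightarrow> real^'n)"
proof (rule bounded_linear_intro[where K=1])
  show "bproj S (x + y) = bproj S x + bproj S y" for x y :: "real^'n"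
    by (simp add: bproj_def vec_eq_iff)
  show "bproj S (r *\<^sub>R x) = r *\<^sub>R bproj S x" for r and x :: "real^'n"
    by (simp add: bproj_def vec_eq_iff)
  show "norm (bproj S x) \<le> norm x * 1" for x :: "real^'n"
    using norm_bproj_le by simp
qed

lemma continuous_on_bproj[continuous_intros]:
  "continuous_on A f \<Longrightarrow> continuous_on A (\<lambda>x. bproj S (f x :: real^'n))"
  using bounded_linear.continuous_on[OF bounded_linear_bproj] by blast

lemma tendsto_bproj[tendsto_intros]:
  "(f \<longlongrightarrow> l) F \<Longrightarrow> ((\<lambda>x. bproj S (f x :: real^'n)) \<longlongrightarrow> bproj S l) F"
  using bounded_linear.tendsto[OF bounded_linear_bproj] by blast

lemma continuous_on_eval[continuous_intros]:
  fixes g :: "'b::topological_space \<Rightarrow> (real \<Rightarrow>\<^sub>C 'a::metric_space)"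
  assumes "continuous_on A g"
  shows "continuous_on A (\<lambda>x. apply_bcontfun (g x) t)"
proof -
  have "continuous_on UNIV (\<lambda>\<Theta>::real \<Rightarrow>\<^sub>C 'a. apply_bcontfun \<Theta> t)"
    unfolding continuous_on_iff
  proof (intro ballI allI impI)
    fix x :: "real \<Rightarrow>\<^sub>C 'a" and e :: real assume "e > 0"
    show "\<exists>d>0. \<forall>x'\<in>UNIV. dist x' x < d \<longrightarrow> dist (apply_bcontfun x' t) (apply_bcontfun x t) < e"
    proof -
      have "\<forall>x'\<in>UNIV. dist x' x < e \<longrightarrow> dist (apply_bcontfun x' t) (apply_bcontfun x t) < e"
        using dist_bounded[where g=x and x=t] by (meson le_less_trans)
      then show ?thesis using \<open>e > 0\<close> by blast
    qed
  qed
  then show ?thesis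
    using continuous_on_compose2[OF _ assms] by blast
qed

lemma closed_paths: "closed (paths T :: (real \<Rightarrow>\<^sub>C 'a::metric_space) set)"
proof -
  have "paths T = (\<Inter>t. {\<Theta>::real \<Rightarrow>\<^sub>C 'a. apply_bcontfun \<Theta> t = apply_bcontfun \<Theta> (max 0 (min T t))})"
    by (auto simp: paths_def)
  moreover have "closed {\<Theta>::real \<Rightarrow>\<^sub>C 'a. apply_bcontfun \<Theta> t = apply_bcontfun \<Theta> (max 0 (min T t))}" for t
    by (intro closed_Collect_eq continuous_intros continuous_on_id)
  ultimately show ?thesis by auto
qed

lemma meas_borel:
  assumes "sets M = sets borel" "f \<in> borel_measurable borel"
  shows "f \<in> borel_measurable M"
proof -
  have "measurable M borel = measurable borel (borel :: 'b measure)"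
    by (rule measurable_cong_sets) (simp_all add: assms)
  then show ?thesis using assms(2) by simp
qed

lemma ppm_facts:
  assumes "path_prob_measure T M"
  shows "prob_space M" "sets M = sets borel" "AE \<Theta> in M. \<Theta> \<in> paths T"
    "space M = UNIV"
proof -
  show "prob_space M" "sets M = sets borel" "AE \<Theta> in M. \<Theta> \<in> paths T"
    using assms unfolding path_prob_measure_def by blast+
  then show "space M = UNIV" using sets_eq_imp_space_eq[of M borel] by simp
qed

lemma ppm_meas:
  assumes "path_prob_measure T M" "continuous_on UNIV f"
  shows "f \<in> borel_measurable M"
  using meas_borel[OF ppm_facts(2)[OF assms(1)] borel_measurable_continuous_onI[OF assms(2)]] .

lemma ppm_setint:
  fixes f :: "(real \<Rightarrow>\<^sub>C 'a::metric_space) \<Rightarrow> real"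
  assumes "path_prob_measure T M" "f \<in> borel_measurable M"
  shows "(\<integral>\<Theta>\<in>paths T. f \<Theta> \<partial>M) = (\<integral>\<Theta>. f \<Theta> \<partial>M)"
  unfolding set_lebesgue_integral_def
proof (rule integral_cong_AE)
  have "paths T \<in> sets M"
    using ppm_facts(2)[OF assms(1)] borel_closed[OF closed_paths] by simp
  then show "(\<lambda>\<Theta>. indicator (paths T) \<Theta> *\<^sub>R f \<Theta>) \<in> borel_measurable M"
    using assms(2) by (intro borel_measurable_scaleR borel_measurable_indicator)
  show "f \<in> borel_measurable M" by fact
  show "AE \<Theta> in M. indicator (paths T) \<Theta> *\<^sub>R f \<Theta> = f \<Theta>"
    using ppm_facts(3)[OF assms(1)] by eventually_elim simp
qed

lemma weak_AE0:
  fixes f :: "(real \<Rightarrow>\<^sub>C 'a::metric_space) \<Rightarrow> real"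
  assumes M: "path_prob_measure T M" and Ms: "\<And>n. path_prob_measure T (Ms n)"
    and w: "weak_conv_paths T Ms M"
    and fc: "continuous_on UNIV f" and f0: "\<And>\<Theta>. 0 \<le> f \<Theta>" and f1: "\<And>\<Theta>. f \<Theta> \<le> 1"
    and k: "strict_mono k" and lim: "(\<lambda>n. \<integral>\<Theta>. f \<Theta> \<partial>Ms (k n)) \<longlonglongrightarrow> 0"
  shows "AE \<Theta> in M. f \<Theta> = 0"
proof -
  have "bounded (f ` paths T)"
    unfolding bounded_real
  proof (intro exI ballI)
    fix x assume "x \<in> f ` paths T"
    then obtain y where "x = f y" by auto
    then show "\<bar>x\<bar> \<le> 1" using f0[of y] f1[of y] by simp
  qed
  then have "(\<lambda>n. \<integral>\<Theta>\<in>paths T. f \<Theta> \<partial>Ms n) \<longlonglongrightarrow> (\<integral>\<Theta>\<in>paths T. f \<Theta> \<partial>M)"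
    using w fc unfolding weak_conv_paths_def by (metis continuous_on_subset subset_UNIV)
  then have "(\<lambda>n. \<integral>\<Theta>. f \<Theta> \<partial>Ms n) \<longlonglongrightarrow> (\<integral>\<Theta>. f \<Theta> \<partial>M)"
    using ppm_setint[OF Ms ppm_meas[OF Ms fc]] ppm_setint[OF M ppm_meas[OF M fc]] by simp
  from LIMSEQ_subseq_LIMSEQ[OF this k] have "(\<lambda>n. \<integral>\<Theta>. f \<Theta> \<partial>Ms (k n)) \<longlonglongrightarrow> (\<integral>\<Theta>. f \<Theta> \<partial>M)"
    by (simp add: o_def)
  with lim have I0: "(\<integral>\<Theta>. f \<Theta> \<partial>M) = 0" using LIMSEQ_unique by blast
  interpret P: prob_space M using ppm_facts(1)[OF M] .
  have "integrable M f"
    by (rule P.integrable_const_bound[where B=1]) (auto simp: f0 f1 ppm_meas[OF M fc] abs_of_nonneg)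
  then show ?thesis
    using I0 integral_nonneg_eq_0_iff_AE[of M f] f0 by auto
qed

lemma weak_closed:
  assumes M: "path_prob_measure T M" and Ms: "\<And>n. path_prob_measure T (Ms n)"
    and w: "weak_conv_paths T Ms M"
    and C: "closed (C :: (real \<Rightarrow>\<^sub>C 'a::metric_space) set)" and ae: "\<And>n. AE \<Theta> in Ms n. \<Theta> \<in> C"
  shows "AE \<Theta> in M. \<Theta> \<in> C"
proof -
  have "C \<noteq> {}"
  proof
    assume "C = {}"
    then have "AE \<Theta> in Ms 0. False" using ae[of 0] by simp
    then show False
      using prob_space.AE_False[OF ppm_facts(1)[OF Ms]] by simp
  qed
  define f where "f \<Theta> = min 1 (infdist \<Theta> C)" for \<Theta>
  have fc: "continuous_on UNIV f" unfolding f_def by (intro continuous_intros continuous_on_id)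
  have "AE \<Theta> in M. f \<Theta> = 0"
  proof (rule weak_AE0[OF M Ms w fc _ _ strict_mono_id])
    show "0 \<le> f \<Theta>" for \<Theta> by (simp add: f_def infdist_nonneg)
    show "f \<Theta> \<le> 1" for \<Theta> by (simp add: f_def)
    have "(\<integral>\<Theta>. f \<Theta> \<partial>Ms n) = (\<integral>\<Theta>. 0 \<partial>Ms n)" for n
    proof (rule integral_cong_AE)
      show "f \<in> borel_measurable (Ms n)" by (rule ppm_meas[OF Ms fc])
      show "(\<lambda>_. 0::real) \<in> borel_measurable (Ms n)" by simp
      show "AE \<Theta> in Ms n. f \<Theta> = 0" using ae[of n] by eventually_elim (simp add: f_def infdist_zero)
    qed
    then show "(\<lambda>n. \<integral>\<Theta>. f \<Theta> \<partial>Ms (id n)) \<longlonglongrightarrow> 0" by simp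
  qed
  then show ?thesis
  proof eventually_elim
    case (elim \<Theta>)
    then have "infdist \<Theta> C = 0" by (simp add: f_def min_def split: if_splits)
    then show ?case using in_closure_iff_infdist_zero[OF \<open>C \<noteq> {}\<close>] C by (simp add: closure_closed)
  qed
qed



lemma measure_eq_bc:
  fixes \<mu> \<nu> :: "'a::metric_space measure"
  assumes fm: "finite_measure \<mu>" "finite_measure \<nu>"
    and sm: "sets \<mu> = sets borel" and sn: "sets \<nu> = sets borel"
    and eq: "\<And>g::'a \<Rightarrow> real. continuous_on UNIV g \<Longrightarrow> (\<And>x. 0 \<le> g x) \<Longrightarrow> (\<And>x. g x \<le> 1) \<Longrightarrow>
               (\<integral>x. g x \<partial>\<mu>) = (\<integral>x. g x \<partial>\<nu>)"
  shows "\<mu> = \<nu>"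
proof -
  have spm: "space \<mu> = UNIV" using sets_eq_imp_space_eq[OF sm] by simp
  have spn: "space \<nu> = UNIV" using sets_eq_imp_space_eq[OF sn] by simp
  have sb: "sets (borel::'a measure) = sigma_sets UNIV (Collect closed)"
    by (subst borel_eq_closed) (simp add: sets_measure_of)
  have mC: "measure \<mu> C = measure \<nu> C" if C: "closed C" for C :: "'a set"
  proof (cases "C = {}")
    case True then show ?thesis by simp
  next
    case False
    define g where "g j x = max 0 (1 - real j * infdist x C)" for j :: nat and x
    have gc: "continuous_on UNIV (g j)" for j unfolding g_def
      by (intro continuous_intros continuous_on_id)
    have lim: "(\<lambda>j. g j x) \<longlonglongrightarrow> indicator C x" for x
    proof (cases "x \<in> C")
      case True then show ?thesis by (simp add: g_def infdist_zero)
    next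
      case xn: False
      have "infdist x C \<noteq> 0"
        using in_closure_iff_infdist_zero[OF False] xn C by (simp add: closure_closed)
      then have ip: "infdist x C > 0" using infdist_nonneg[of x C] by linarith
      obtain N :: nat where N: "1 / infdist x C < N" using reals_Archimedean2 by blast
      have "eventually (\<lambda>j. g j x = indicator C x) sequentially"
        unfolding eventually_sequentially
      proof (intro exI allI impI)
        fix j assume "N \<le> j"
        then have "1 / infdist x C < real j" using N by linarith
        then have "1 < real j * infdist x C" using ip by (simp add: field_simps)
        then show "g j x = indicator C x" using xn by (simp add: g_def)
      qed
      then show ?thesis by (rule tendsto_eventually)
    qed
    have conv: "(\<lambda>j. \<integral>x. g j x \<partial>m) \<longlonglongrightarrow> measure m C"
      if fmm: "finite_measure m" and smm: "sets m = sets borel" for m :: "'a measure"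
    proof -
      interpret F: finite_measure m by (rule fmm)
      have spmm: "space m = UNIV" using sets_eq_imp_space_eq[OF smm] by simp
      have Cm: "C \<in> sets m" using smm C by auto
      have "(\<lambda>j. \<integral>x. g j x \<partial>m) \<longlonglongrightarrow> (\<integral>x. indicator C x \<partial>m)"
      proof (rule integral_dominated_convergence[where w="\<lambda>_. 1"])
        show "(indicator C :: 'a \<Rightarrow> real) \<in> borel_measurable m" using Cm by simp
        show "g j \<in> borel_measurable m" for j
          using meas_borel[OF smm borel_measurable_continuous_onI[OF gc]] .
        show "integrable m (\<lambda>_. 1::real)" by simp
        show "AE x in m. (\<lambda>j. g j x) \<longlonglongrightarrow> indicator C x" using lim by simp
        show "AE x in m. norm (g j x) \<le> 1" for j by (auto simp: g_def infdist_nonneg)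
      qed
      then show ?thesis using spmm by simp
    qed
    have "(\<lambda>j. \<integral>x. g j x \<partial>\<mu>) = (\<lambda>j. \<integral>x. g j x \<partial>\<nu>)"
    proof (rule ext)
      fix j show "(\<integral>x. g j x \<partial>\<mu>) = (\<integral>x. g j x \<partial>\<nu>)"
        by (rule eq) (use gc in \<open>auto simp: g_def infdist_nonneg\<close>)
    qed
    then show ?thesis using conv[OF fm(1) sm] conv[OF fm(2) sn] LIMSEQ_unique by metis
  qed
  show ?thesis
  proof (rule measure_eqI_generator_eq[where E="Collect closed" and \<Omega>=UNIV and A="\<lambda>_. UNIV"])
    show "Int_stable (Collect closed :: 'a set set)" by (auto simp: Int_stable_def)
    show "Collect closed \<subseteq> Pow (UNIV :: 'a set)" by auto
    show "emeasure \<mu> X = emeasure \<nu> X" if "X \<in> Collect closed" for X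
      using mC[of X] that sm sn fm
      by (simp add: finite_measure.emeasure_eq_measure)
    show "sets \<mu> = sigma_sets UNIV (Collect closed)" using sm sb by simp
    show "sets \<nu> = sigma_sets UNIV (Collect closed)" using sn sb by simp
    show "range (\<lambda>_. UNIV) \<subseteq> Collect closed" by auto
    show "(\<Union>i. UNIV) = (UNIV::'a set)" by simp
    show "emeasure \<mu> UNIV \<noteq> \<infinity>" for i::nat
      using finite_measure.emeasure_finite[OF fm(1), of UNIV] spm by (simp add: infinity_ennreal_def)
  qed
qed

lemma limit_subseq:
  fixes G :: "nat \<Rightarrow> real^'n \<Rightarrow> real \<Rightarrow> real^'n"
  assumes T: "T > 0" and R: "R \<ge> 0" and K: "K \<ge> 0"
    and lipt: "\<And>n a s t. s \<in> {0..T} \<Longrightarrow> t \<in> {0..T} \<Longrightarrow> norm (G n a t - G n a s) \<le> R * \<bar>t - s\<bar>"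
    and init: "\<And>n a. norm (G n a 0) \<le> norm a"
    and lipa: "\<And>n a b t. t \<in> {0..T} \<Longrightarrow> norm (G n a t - G n b t) \<le> K * norm (a - b)"
  obtains k where "strict_mono k" "\<And>a t. t \<in> {0..T} \<Longrightarrow> convergent (\<lambda>n. G (k n) a t)"
proof -
  obtain D1 :: "(real^'n) set" where D1: "countable D1" "\<And>X. open X \<Longrightarrow> X \<noteq> {} \<Longrightarrow> \<exists>d\<in>D1. d \<in> X"
    using countable_dense_setE by blast
  define S where "S = D1 \<times> (\<rat> \<inter> {0..T})"
  have cS: "countable S" unfolding S_def
    using D1(1) countable_rat by (intro countable_SIGMA) auto
  define f where "f n x = (1 / (1 + norm (fst x))) *\<^sub>R G n (fst x) (snd x)" for n x
  have Gb: "norm (G n a t) \<le> R * T + norm a" if "t \<in> {0..T}" for n a t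
  proof -
    have "norm (G n a t) \<le> norm (G n a t - G n a 0) + norm (G n a 0)"
      using norm_triangle_ineq[of "G n a t - G n a 0" "G n a 0"] by simp
    also have "\<dots> \<le> R * \<bar>t - 0\<bar> + norm a" using lipt[of 0 t n a] that T init[of n a] by auto
    also have "\<dots> \<le> R * T + norm a" using that R by (auto intro: mult_left_mono)
    finally show ?thesis .
  qed
  have fb: "norm (f n x) \<le> R * T + 1" if xS: "x \<in> S" for n x
  proof -
    obtain a t where x: "x = (a, t)" and t: "t \<in> {0..T}" using xS by (cases x) (auto simp: S_def)
    have p: "1 + norm a > 0" by (simp add: add_pos_nonneg)
    have "norm (f n x) = norm (G n a t) / (1 + norm a)" using p by (simp add: f_def x)
    also have "\<dots> \<le> (R * T + norm a) / (1 + norm a)"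
      using Gb[OF t] p by (simp add: divide_right_mono)
    also have "\<dots> \<le> R * T + 1"
      using p R T by (simp add: divide_le_eq algebra_simps mult_nonneg_nonneg)
    finally show ?thesis .
  qed
  have "\<exists>k. strict_mono k \<and> (\<forall>x\<in>S. \<exists>l. (\<lambda>n. f (k n) x) \<longlonglongrightarrow> l)"
    by (rule function_convergent_subsequence[OF cS, of f "R * T + 1"]) (auto intro: fb)
  then obtain k where k: "strict_mono k" and kc: "\<And>x. x \<in> S \<Longrightarrow> \<exists>l. (\<lambda>n. f (k n) x) \<longlonglongrightarrow> l"
    by blast
  have convS: "convergent (\<lambda>n. G (k n) b q)" if bq: "b \<in> D1" "q \<in> \<rat>" "q \<in> {0..T}" for b q
  proof -
    obtain l where "(\<lambda>n. f (k n) (b, q)) \<longlonglongrightarrow> l" using kc[of "(b,q)"] bq by (auto simp: S_def)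
    then have "(\<lambda>n. (1 + norm b) *\<^sub>R f (k n) (b, q)) \<longlonglongrightarrow> (1 + norm b) *\<^sub>R l"
      by (intro tendsto_intros)
    moreover have "(1 + norm b) *\<^sub>R f (k n) (b, q) = G (k n) b q" for n
      using add_pos_nonneg[of 1 "norm b"] by (simp add: f_def)
    ultimately show ?thesis unfolding convergent_def by auto
  qed
  have "convergent (\<lambda>n. G (k n) a t)" if t: "t \<in> {0..T}" for a t
  proof -
    have "Cauchy (\<lambda>n. G (k n) a t)"
    proof (rule metric_CauchyI)
      fix e :: real assume e: "e > 0"
      define \<delta> where "\<delta> = e / (3 * (K + R + 1))"
      have \<delta>: "\<delta> > 0" using e K R by (simp add: \<delta>_def)
      obtain b where b: "b \<in> D1" "b \<in> ball a \<delta>" using D1(2)[of "ball a \<delta>"] \<delta> by auto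
      have "max 0 (t - \<delta>) < min T (t + \<delta>)" using t T \<delta> by auto
      then obtain q where q: "q \<in> \<rat>" "max 0 (t - \<delta>) < q" "q < min T (t + \<delta>)"
        using Rats_dense_in_real by blast
      have qT: "q \<in> {0..T}" using q by auto
      have tq: "\<bar>t - q\<bar> < \<delta>" using q by auto
      have ab: "norm (a - b) < \<delta>" using b by (simp add: dist_norm)
      have close: "norm (G n a t - G n b q) < e / 3" for n
      proof -
        have "norm (G n a t - G n b q) \<le> norm (G n a t - G n b t) + norm (G n b t - G n b q)"
          using norm_triangle_ineq[of "G n a t - G n b t" "G n b t - G n b q"] by simp
        also have "\<dots> \<le> K * norm (a - b) + R * \<bar>t - q\<bar>"
          using lipa[OF t, of n a b] lipt[OF qT t, of n b] by linarith
        also have "\<dots> \<le> K * \<delta> + R * \<delta>"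
          using ab tq K R by (intro add_mono mult_left_mono) auto
        also have "\<dots> < e / 3"
        proof -
          have "(K + R) * \<delta> < (K + R + 1) * \<delta>" using \<delta> by simp
          also have "\<dots> = e / 3" using K R by (simp add: \<delta>_def field_simps)
          finally show ?thesis by (simp add: algebra_simps)
        qed
        finally show ?thesis .
      qed
      have "Cauchy (\<lambda>n. G (k n) b q)"
        using convS[OF b(1) q(1) qT] by (simp add: Cauchy_convergent_iff)
      then obtain N where N: "\<And>m n. m \<ge> N \<Longrightarrow> n \<ge> N \<Longrightarrow> dist (G (k m) b q) (G (k n) b q) < e / 3"
        using metric_CauchyD[of "\<lambda>n. G (k n) b q" "e/3"] e by auto
      show "\<exists>N. \<forall>m\<ge>N. \<forall>n\<ge>N. dist (G (k m) a t) (G (k n) a t) < e"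
      proof (intro exI allI impI)
        fix m n assume mn: "N \<le> m" "N \<le> n"
        have "dist (G (k m) a t) (G (k n) a t) \<le> dist (G (k m) a t) (G (k m) b q) + dist (G (k m) b q) (G (k n) b q) + dist (G (k n) b q) (G (k n) a t)"
          using dist_triangle[of "G (k m) a t" "G (k n) a t" "G (k m) b q"]
            dist_triangle[of "G (k m) b q" "G (k n) a t" "G (k n) b q"] by linarith
        also have "\<dots> < e/3 + e/3 + e/3"
          using close[of "k m"] close[of "k n"] N[OF mn] by (simp add: dist_norm norm_minus_commute)
        finally show "dist (G (k m) a t) (G (k n) a t) < e" by simp
      qed
    qed
    then show ?thesis by (simp add: Cauchy_convergent_iff)
  qed
  then show ?thesis using that k by blast
qed



lemma cont_lip:
  fixes g :: "'a::real_normed_vector \<Rightarrow> 'b::real_normed_vector"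
  assumes "\<And>a b. norm (g a - g b) \<le> K * norm (a - b)" "0 \<le> K"
  shows "continuous_on UNIV g"
proof (rule lipschitz_on_continuous_on[OF lipschitz_onI])
  fix x y show "dist (g x) (g y) \<le> K * dist x y" using assms(1)[of x y] by (simp add: dist_norm)
qed (rule assms(2))

lemma weak_lim:
  fixes f :: "(real \<Rightarrow>\<^sub>C 'a::metric_space) \<Rightarrow> real"
  assumes M: "path_prob_measure T M" and Ms: "\<And>n. path_prob_measure T (Ms n)"
    and w: "weak_conv_paths T Ms M"
    and fc: "continuous_on UNIV f" and f0: "\<And>\<Theta>. 0 \<le> f \<Theta>" and f1: "\<And>\<Theta>. f \<Theta> \<le> 1"
  shows "(\<lambda>n. \<integral>\<Theta>. f \<Theta> \<partial>Ms n) \<longlonglongrightarrow> (\<integral>\<Theta>. f \<Theta> \<partial>M)"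
proof -
  have "bounded (f ` paths T)"
    unfolding bounded_real
  proof (intro exI ballI)
    fix x assume "x \<in> f ` paths T"
    then obtain y where "x = f y" by auto
    then show "\<bar>x\<bar> \<le> 1" using f0[of y] f1[of y] by simp
  qed
  then have "(\<lambda>n. \<integral>\<Theta>\<in>paths T. f \<Theta> \<partial>Ms n) \<longlonglongrightarrow> (\<integral>\<Theta>\<in>paths T. f \<Theta> \<partial>M)"
    using w[unfolded weak_conv_paths_def, THEN spec[of _ f]] continuous_on_subset[OF fc subset_UNIV] by blast
  then show ?thesis
    using ppm_setint[OF Ms ppm_meas[OF Ms fc]] ppm_setint[OF M ppm_meas[OF M fc]] by simp
qed

lemma prob_finite: "prob_space M \<Longrightarrow> finite_measure M"
  unfolding prob_space_def by blast

theorem theorem8p7: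
  fixes T R :: real and L :: nat and blk :: "'n::finite \<Rightarrow> nat"
    and \<mu>0b :: "nat \<Rightarrow> (real^'n) measure"
    and Ms :: "nat \<Rightarrow> (real \<Rightarrow>\<^sub>C (real^'n)) measure"
    and M :: "(real \<Rightarrow>\<^sub>C (real^'n)) measure"
  assumes "T > 0" and "L \<ge> 3"
    and "\<forall>i. blk i \<le> L" and "\<forall>l\<le>L. \<exists>i. blk i = l"
    and "\<forall>l\<le>L. init_block_measure blk l (\<mu>0b l)"
    and "R > 0"
    and "\<forall>n. special_measure T L blk \<mu>0b R (Ms n)"
    and "path_prob_measure T M"
    and "weak_conv_paths T Ms M"
  shows "special_measure T L blk \<mu>0b R M"
proof -
  note T = \<open>T > 0\<close> and R = \<open>R > 0\<close> and M = \<open>path_prob_measure T M\<close>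
    and w = \<open>weak_conv_paths T Ms M\<close>
  define Q where "Q = (bproj (blockset blk (L - 1)) :: real^'n \<Rightarrow> real^'n)"
  define Q2 where "Q2 = (bproj (blockset blk (L - 1) \<union> blockset blk L) :: real^'n \<Rightarrow> real^'n)"
  define ev0 where "ev0 = (\<lambda>\<Theta>::real \<Rightarrow>\<^sub>C (real^'n). apply_bcontfun \<Theta> 0)"
  define \<nu> where "\<nu> = init_measure L \<mu>0b"
  have PR: "in_PR T L blk \<mu>0b R (Ms n)" for n
    using assms(7) by (simp add: special_measure_def)
  have Ms: "path_prob_measure T (Ms n)" for n using PR[of n] by (simp add: in_PR_def)
  have distMs: "distr (Ms n) borel ev0 = \<nu>" for n using PR[of n] by (simp add: in_PR_def ev0_def \<nu>_def)
  have "\<forall>n. \<exists>F. special_function T L blk R F \<and>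
        (AE \<Theta> in Ms n. \<forall>t\<in>{0..T}. Q (apply_bcontfun \<Theta> t) = Q (F (apply_bcontfun \<Theta> 0) t))"
    using assms(7) by (simp add: special_measure_def Q_def)
  then have "\<exists>Fs. \<forall>n. special_function T L blk R (Fs n) \<and>
        (AE \<Theta> in Ms n. \<forall>t\<in>{0..T}. Q (apply_bcontfun \<Theta> t) = Q (Fs n (apply_bcontfun \<Theta> 0) t))"
    by (rule choice)
  then obtain Fs where Fs: "\<forall>n. special_function T L blk R (Fs n) \<and>
        (AE \<Theta> in Ms n. \<forall>t\<in>{0..T}. Q (apply_bcontfun \<Theta> t) = Q (Fs n (apply_bcontfun \<Theta> 0) t))"
    by blast
  have Fs_sp: "\<And>n. special_function T L blk R (Fs n)" using Fs by blast
  have Fs_ae: "\<And>n. AE \<Theta> in Ms n. \<forall>t\<in>{0..T}. Q (apply_bcontfun \<Theta> t) = Q (Fs n (apply_bcontfun \<Theta> 0) t)"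
    using Fs by blast
  have ev0c: "continuous_on UNIV ev0" unfolding ev0_def by (intro continuous_intros continuous_on_id)
  have ev0m: "ev0 \<in> measurable (Ms n) borel" for n using ppm_meas[OF Ms ev0c] by simp
  have ev0mM: "ev0 \<in> measurable M borel" using ppm_meas[OF M ev0c] by simp
  have \<nu>p: "prob_space \<nu>"
    using prob_space.prob_space_distr[OF ppm_facts(1)[OF Ms[of 0]] ev0m[of 0]] distMs[of 0] by simp
  have \<nu>s: "sets \<nu> = sets borel" using distMs[of 0] by (metis sets_distr)

  define G where "G n a t = Q (Fs n a t)" for n a t
  have lipt: "norm (G n a t - G n a s) \<le> R * \<bar>t - s\<bar>" if "s \<in> {0..T}" "t \<in> {0..T}" for n a s t
    using Fs_sp[of n] that unfolding special_function_def G_def Q_def by (simp add: bproj_diff)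
  have G0: "G n a 0 = Q a" for n a
    using Fs_sp[of n] unfolding special_function_def G_def Q_def by simp
  have init: "norm (G n a 0) \<le> norm a" for n a
    unfolding G0 Q_def by (rule norm_bproj_le)
  have lipa0: "norm (G n a t - G n b t) \<le> exp (R * t) * norm (Q2 (a - b))" if "t \<in> {0..T}" for n a b t
    using Fs_sp[of n] that unfolding special_function_def G_def Q_def Q2_def by (simp add: bproj_diff)
  have lipa: "norm (G n a t - G n b t) \<le> exp (R * T) * norm (a - b)" if "t \<in> {0..T}" for n a b t
  proof -
    have "exp (R * t) * norm (Q2 (a - b)) \<le> exp (R * T) * norm (a - b)"
      using that R unfolding Q2_def
      by (intro mult_mono norm_bproj_le) (auto intro: mult_left_mono)
    then show ?thesis using lipa0[OF that, of n a b] by linarith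
  qed
  have Rge: "R \<ge> 0" using R by simp
  have Kge: "exp (R * T) \<ge> 0" by simp
  have "\<exists>k. strict_mono k \<and> (\<forall>a. \<forall>t\<in>{0..T}. convergent (\<lambda>n. G (k n) a t))"
  proof (rule limit_subseq[where G=G and T=T and R=R and K="exp (R * T)"])
    show "0 < T" by (rule T)
    show "0 \<le> R" by (rule Rge)
    show "0 \<le> exp (R * T)" by (rule Kge)
    show "norm (G n a t - G n a s) \<le> R * \<bar>t - s\<bar>" if "s \<in> {0..T}" "t \<in> {0..T}" for n a s t
      by (rule lipt[OF that])
    show "norm (G n a 0) \<le> norm a" for n a by (rule init)
    show "norm (G n a t - G n b t) \<le> exp (R * T) * norm (a - b)" if "t \<in> {0..T}" for n a b t
      by (rule lipa[OF that])
    show "\<exists>k. strict_mono k \<and> (\<forall>a. \<forall>t\<in>{0..T}. convergent (\<lambda>n. G (k n) a t))"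
      if "strict_mono k" "\<And>a t. t \<in> {0..T} \<Longrightarrow> convergent (\<lambda>n. G (k n) a t)" for k
      using that by blast
  qed
  then obtain k where k: "strict_mono k" and kc: "\<And>a t. t \<in> {0..T} \<Longrightarrow> convergent (\<lambda>n. G (k n) a t)"
    by blast
  define F where "F a t = lim (\<lambda>n. G (k n) a t)" for a t
  have FL: "(\<lambda>n. G (k n) a t) \<longlonglongrightarrow> F a t" if "t \<in> {0..T}" for a t
    using kc[OF that] unfolding F_def by (simp add: convergent_LIMSEQ_iff)
  have QF: "Q (F a t) = F a t" if "t \<in> {0..T}" for a t
  proof -
    have "(\<lambda>n. Q (G (k n) a t)) \<longlonglongrightarrow> Q (F a t)" unfolding Q_def by (intro tendsto_intros FL that)
    moreover have "Q (G (k n) a t) = G (k n) a t" for n by (simp add: G_def Q_def)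
    ultimately have "(\<lambda>n. G (k n) a t) \<longlonglongrightarrow> Q (F a t)" by simp
    from LIMSEQ_unique[OF FL[OF that] this] show ?thesis by simp
  qed
  have F0: "F a 0 = Q a" for a
  proof -
    have "(\<lambda>n. G (k n) a 0) \<longlonglongrightarrow> Q a" unfolding G0 by simp
    moreover have z: "(0::real) \<in> {0..T}" using T by simp
    ultimately show ?thesis using LIMSEQ_unique[OF FL[OF z]] by blast
  qed
  have Flipt: "norm (F a t - F a s) \<le> R * \<bar>t - s\<bar>" if "s \<in> {0..T}" "t \<in> {0..T}" for a s t
  proof -
    have "(\<lambda>n. norm (G (k n) a t - G (k n) a s)) \<longlonglongrightarrow> norm (F a t - F a s)"
      by (intro tendsto_intros FL that)
    then show ?thesis by (rule LIMSEQ_le_const2) (use lipt[OF that] in auto)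
  qed
  have Flipa0: "norm (F a t - F b t) \<le> exp (R * t) * norm (Q2 (a - b))" if "t \<in> {0..T}" for a b t
  proof -
    have "(\<lambda>n. norm (G (k n) a t - G (k n) b t)) \<longlonglongrightarrow> norm (F a t - F b t)"
      by (intro tendsto_intros FL that)
    then show ?thesis by (rule LIMSEQ_le_const2) (use lipa0[OF that] in auto)
  qed
  have Flipa: "norm (F a t - F b t) \<le> exp (R * T) * norm (a - b)" if "t \<in> {0..T}" for a b t
  proof -
    have "(\<lambda>n. norm (G (k n) a t - G (k n) b t)) \<longlonglongrightarrow> norm (F a t - F b t)"
      by (intro tendsto_intros FL that)
    then show ?thesis by (rule LIMSEQ_le_const2) (use lipa[OF that] in auto)
  qed
  have Fsp: "special_function T L blk R F"
    unfolding special_function_def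
  proof (intro conjI allI ballI)
    fix a s t assume st: "s \<in> {0..T}" "t \<in> {0..T}"
    show "norm (bproj (blockset blk (L - 1)) (F a t - F a s)) \<le> R * \<bar>t - s\<bar>"
      using Flipt[OF st, of a] QF[OF st(1)] QF[OF st(2)] unfolding Q_def by (simp add: bproj_diff)
  next
    fix a
    show "bproj (blockset blk (L - 1)) (F a 0) = bproj (blockset blk (L - 1)) a"
      using F0[of a] unfolding Q_def by simp
  next
    fix t a b assume t: "t \<in> {0..T}"
    show "norm (bproj (blockset blk (L - 1)) (F a t - F b t))
          \<le> exp (R * t) * norm (bproj (blockset blk (L - 1) \<union> blockset blk L) (a - b))"
      using Flipa0[OF t, of a b] QF[OF t, of a] QF[OF t, of b] unfolding Q_def Q2_def by (simp add: bproj_diff)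
  qed

  have Fc: "continuous_on UNIV (\<lambda>a. F a t)" if "t \<in> {0..T}" for t
    by (rule cont_lip[OF Flipa[OF that]]) simp
  have Gc: "continuous_on UNIV (\<lambda>a. G n a t)" if "t \<in> {0..T}" for n t
    by (rule cont_lip[OF lipa[OF that]]) simp

  define C3 where "C3 = (\<Inter>t\<in>{0..T}. \<Inter>i\<in>{i. blk i = 0 \<or> blk i = L}.
      {\<Theta>::real \<Rightarrow>\<^sub>C (real^'n). apply_bcontfun \<Theta> t $ i = apply_bcontfun \<Theta> 0 $ i})"
  define C4 where "C4 = (\<Inter>l\<in>{..L}. \<Inter>s\<in>{0..T}. \<Inter>t\<in>{0..T}.
      {\<Theta>::real \<Rightarrow>\<^sub>C (real^'n). norm (bproj (blockset blk l) (apply_bcontfun \<Theta> t - apply_bcontfun \<Theta> s)) \<le> R * \<bar>t - s\<bar>})"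
  have evc: "continuous_on UNIV (\<lambda>\<Theta>::real \<Rightarrow>\<^sub>C (real^'n). apply_bcontfun \<Theta> t)" for t
    by (rule continuous_on_eval[OF continuous_on_id])
  have c3: "closed {\<Theta>::real \<Rightarrow>\<^sub>C (real^'n). apply_bcontfun \<Theta> t $ i = apply_bcontfun \<Theta> 0 $ i}" for t i
    by (rule closed_Collect_eq[OF continuous_on_component[OF evc] continuous_on_component[OF evc]])
  have c4: "closed {\<Theta>::real \<Rightarrow>\<^sub>C (real^'n). norm (bproj (blockset blk l) (apply_bcontfun \<Theta> t - apply_bcontfun \<Theta> s)) \<le> R * \<bar>t - s\<bar>}" for l s t
    by (rule closed_Collect_le[OF continuous_on_norm[OF continuous_on_bproj[OF continuous_on_diff[OF evc evc]]] continuous_on_const])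
  have C3c: "closed C3" unfolding C3_def
    by (rule closed_INT, rule ballI, rule closed_INT, rule ballI, rule c3)
  have C4c: "closed C4" unfolding C4_def
    by (rule closed_INT, rule ballI, rule closed_INT, rule ballI, rule closed_INT, rule ballI, rule c4)
  have C3M: "AE \<Theta> in M. \<Theta> \<in> C3"
  proof (rule weak_closed[OF M Ms w C3c])
    fix n show "AE \<Theta> in Ms n. \<Theta> \<in> C3"
    proof -
      have "AE \<Theta> in Ms n. \<forall>t\<in>{0..T}. \<forall>i. (blk i = 0 \<or> blk i = L) \<longrightarrow> apply_bcontfun \<Theta> t $ i = apply_bcontfun \<Theta> 0 $ i"
        using PR[of n] unfolding in_PR_def by blast
      then show ?thesis
      proof eventually_elim
        case (elim \<Theta>) then show ?case unfolding C3_def by blast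
      qed
    qed
  qed
  have C4M: "AE \<Theta> in M. \<Theta> \<in> C4"
  proof (rule weak_closed[OF M Ms w C4c])
    fix n show "AE \<Theta> in Ms n. \<Theta> \<in> C4"
    proof -
      have "AE \<Theta> in Ms n. \<forall>l\<le>L. \<forall>s\<in>{0..T}. \<forall>t\<in>{0..T}.
        norm (bproj (blockset blk l) (apply_bcontfun \<Theta> t - apply_bcontfun \<Theta> s)) \<le> R * \<bar>t - s\<bar>"
        using PR[of n] unfolding in_PR_def by blast
      then show ?thesis
      proof eventually_elim
        case (elim \<Theta>) then show ?case unfolding C4_def by blast
      qed
    qed
  qed

  have distM: "distr M borel ev0 = \<nu>"
  proof (rule measure_eq_bc)
    show "finite_measure (distr M borel ev0)"
      using prob_finite[OF prob_space.prob_space_distr[OF ppm_facts(1)[OF M] ev0mM]] .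
    show "finite_measure \<nu>" using prob_finite[OF \<nu>p] .
    show "sets (distr M borel ev0) = sets borel" by simp
    show "sets \<nu> = sets borel" by (rule \<nu>s)
    fix g :: "real^'n \<Rightarrow> real" assume gc: "continuous_on UNIV g" and g0: "\<And>x. 0 \<le> g x" and g1: "\<And>x. g x \<le> 1"
    have gm: "g \<in> borel_measurable borel" using borel_measurable_continuous_onI[OF gc] .
    have gec: "continuous_on UNIV (\<lambda>\<Theta>. g (ev0 \<Theta>))" using continuous_on_compose2[OF gc ev0c] by simp
    have "(\<lambda>n. \<integral>\<Theta>. g (ev0 \<Theta>) \<partial>Ms n) \<longlonglongrightarrow> (\<integral>\<Theta>. g (ev0 \<Theta>) \<partial>M)"
      by (rule weak_lim[OF M Ms w gec]) (auto simp: g0 g1)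
    moreover have "(\<integral>\<Theta>. g (ev0 \<Theta>) \<partial>Ms n) = (\<integral>x. g x \<partial>\<nu>)" for n
      using integral_distr[OF ev0m[of n] gm] distMs[of n] by simp
    ultimately have "(\<lambda>n::nat. \<integral>x. g x \<partial>\<nu>) \<longlonglongrightarrow> (\<integral>\<Theta>. g (ev0 \<Theta>) \<partial>M)" by simp
    then have "(\<integral>\<Theta>. g (ev0 \<Theta>) \<partial>M) = (\<integral>x. g x \<partial>\<nu>)"
      using LIMSEQ_unique[OF tendsto_const] by metis
    then show "(\<integral>x. g x \<partial>distr M borel ev0) = (\<integral>x. g x \<partial>\<nu>)"
      using integral_distr[OF ev0mM gm] by simp
  qed

  have fixt: "AE \<Theta> in M. Q (apply_bcontfun \<Theta> t) = F (ev0 \<Theta>) t" if t: "t \<in> {0..T}" for t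
  proof -
    define f where "f \<Theta> = min 1 (norm (Q (apply_bcontfun \<Theta> t) - F (ev0 \<Theta>) t))" for \<Theta>
    have Fec: "continuous_on UNIV (\<lambda>\<Theta>. F (ev0 \<Theta>) t)" using continuous_on_compose2[OF Fc[OF t] ev0c] by simp
    have fc: "continuous_on UNIV f" unfolding f_def Q_def
      by (intro continuous_intros continuous_on_id Fec)
    define h where "h n a = min 1 (norm (G n a t - F a t))" for n a
    have hc: "continuous_on UNIV (h n)" for n unfolding h_def
      by (intro continuous_intros Gc[OF t] Fc[OF t])
    have hm: "h n \<in> borel_measurable borel" for n using borel_measurable_continuous_onI[OF hc] .
    have hec: "continuous_on UNIV (\<lambda>\<Theta>. h n (ev0 \<Theta>))" for n using continuous_on_compose2[OF hc ev0c] by simp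
    have "AE \<Theta> in M. f \<Theta> = 0"
    proof (rule weak_AE0[OF M Ms w fc _ _ k])
      show "0 \<le> f \<Theta>" for \<Theta> by (simp add: f_def)
      show "f \<Theta> \<le> 1" for \<Theta> by (simp add: f_def)
      have eq: "(\<integral>\<Theta>. f \<Theta> \<partial>Ms n) = (\<integral>a. h n a \<partial>\<nu>)" for n
      proof -
        have "(\<integral>\<Theta>. f \<Theta> \<partial>Ms n) = (\<integral>\<Theta>. h n (ev0 \<Theta>) \<partial>Ms n)"
        proof (rule integral_cong_AE)
          show "f \<in> borel_measurable (Ms n)" by (rule ppm_meas[OF Ms fc])
          show "(\<lambda>\<Theta>. h n (ev0 \<Theta>)) \<in> borel_measurable (Ms n)" by (rule ppm_meas[OF Ms hec])
          show "AE \<Theta> in Ms n. f \<Theta> = h n (ev0 \<Theta>)"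
            using Fs_ae[of n]
          proof eventually_elim
            case (elim \<Theta>)
            then show ?case using t by (simp add: f_def h_def G_def ev0_def)
          qed
        qed
        also have "\<dots> = (\<integral>a. h n a \<partial>\<nu>)"
          using integral_distr[OF ev0m[of n] hm] distMs[of n] by simp
        finally show ?thesis .
      qed
      have "(\<lambda>n. \<integral>a. h (k n) a \<partial>\<nu>) \<longlonglongrightarrow> (\<integral>a. 0 \<partial>\<nu>)"
      proof (rule integral_dominated_convergence[where w="\<lambda>_. 1"])
        interpret P: prob_space \<nu> by (rule \<nu>p)
        show "(\<lambda>_. 0::real) \<in> borel_measurable \<nu>" by simp
        show "h (k n) \<in> borel_measurable \<nu>" for n using meas_borel[OF \<nu>s hm] .
        show "integrable \<nu> (\<lambda>_. 1::real)" by simp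
        show "AE a in \<nu>. (\<lambda>n. h (k n) a) \<longlonglongrightarrow> 0"
        proof (rule AE_I2)
          fix a
          have "(\<lambda>n. min 1 (norm (G (k n) a t - F a t))) \<longlonglongrightarrow> min 1 (norm (F a t - F a t))"
            by (intro tendsto_intros FL t)
          then show "(\<lambda>n. h (k n) a) \<longlonglongrightarrow> 0" by (simp add: h_def)
        qed
        show "AE a in \<nu>. norm (h (k n) a) \<le> 1" for n by (simp add: h_def)
      qed
      then show "(\<lambda>n. \<integral>\<Theta>. f \<Theta> \<partial>Ms (k n)) \<longlonglongrightarrow> 0" using eq by simp
    qed
    then show ?thesis
    proof eventually_elim
      case (elim \<Theta>)
      then show ?case by (simp add: f_def min_def split: if_splits)
    qed
  qed
  have allq: "AE \<Theta> in M. \<forall>t\<in>\<rat> \<inter> {0..T}. Q (apply_bcontfun \<Theta> t) = F (ev0 \<Theta>) t"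
  proof -
    have cq: "countable (\<rat> \<inter> {0..T})" by (rule countable_Int1[OF countable_rat])
    show ?thesis unfolding AE_ball_countable[OF cq] using fixt by blast
  qed
  have specM: "AE \<Theta> in M. \<forall>t\<in>{0..T}. Q (apply_bcontfun \<Theta> t) = Q (F (ev0 \<Theta>) t)"
    using allq C4M
  proof eventually_elim
    case (elim \<Theta>)
    show ?case
    proof
      fix t assume t: "t \<in> {0..T}"
      define d where "d = norm (Q (apply_bcontfun \<Theta> t) - F (ev0 \<Theta>) t)"
      have "d = 0"
      proof (rule ccontr)
        assume "d \<noteq> 0"
        then have d: "d > 0" unfolding d_def by simp
        define \<delta> where "\<delta> = d / (2 * R + 1)"
        have \<delta>: "\<delta> > 0" using d R by (simp add: \<delta>_def)
        have "max 0 (t - \<delta>) < min T (t + \<delta>)" using t T \<delta> by auto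
        then obtain q where q: "q \<in> \<rat>" "max 0 (t - \<delta>) < q" "q < min T (t + \<delta>)"
          using Rats_dense_in_real by blast
        have qT: "q \<in> {0..T}" using q by auto
        have tq: "\<bar>t - q\<bar> < \<delta>" using q by auto
        have e1: "norm (Q (apply_bcontfun \<Theta> t) - Q (apply_bcontfun \<Theta> q)) \<le> R * \<bar>t - q\<bar>"
        proof -
          have "L - 1 \<in> {..L}" by simp
          then have "\<Theta> \<in> {\<Theta>. norm (bproj (blockset blk (L - 1)) (apply_bcontfun \<Theta> t - apply_bcontfun \<Theta> q)) \<le> R * \<bar>t - q\<bar>}"
            using elim(2) t qT unfolding C4_def by blast
          then show ?thesis unfolding Q_def by (simp add: bproj_diff)
        qed
        have e2: "Q (apply_bcontfun \<Theta> q) = F (ev0 \<Theta>) q" using elim(1) q(1) qT by blast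
        have e3: "norm (F (ev0 \<Theta>) q - F (ev0 \<Theta>) t) \<le> R * \<bar>q - t\<bar>" using Flipt[OF t qT] .
        have "d \<le> norm (Q (apply_bcontfun \<Theta> t) - Q (apply_bcontfun \<Theta> q)) + norm (F (ev0 \<Theta>) q - F (ev0 \<Theta>) t)"
        proof -
          have "Q (apply_bcontfun \<Theta> t) - F (ev0 \<Theta>) t = (Q (apply_bcontfun \<Theta> t) - Q (apply_bcontfun \<Theta> q)) + (F (ev0 \<Theta>) q - F (ev0 \<Theta>) t)"
            using e2 by simp
          then show ?thesis unfolding d_def using norm_triangle_ineq by metis
        qed
        also have "\<dots> \<le> R * \<bar>t - q\<bar> + R * \<bar>t - q\<bar>" using e1 e3 by (simp add: abs_minus_commute)
        also have "\<dots> < 2 * R * \<delta> + \<delta>"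
        proof -
          have "R * \<bar>t - q\<bar> \<le> R * \<delta>" using tq R by (intro mult_left_mono) auto
          then show ?thesis using \<delta> by linarith
        qed
        also have "\<dots> = d"
        proof -
          have pos: "2 * R + 1 \<noteq> 0" using R by simp
          have "2 * R * \<delta> + \<delta> = (2 * R + 1) * \<delta>" by (simp add: algebra_simps)
          also have "\<dots> = d" unfolding \<delta>_def using pos by simp
          finally show ?thesis .
        qed
        finally show False by simp
      qed
      then show "Q (apply_bcontfun \<Theta> t) = Q (F (ev0 \<Theta>) t)" using QF[OF t] unfolding d_def by simp
    qed
  qed

  show ?thesis
    unfolding special_measure_def in_PR_def
  proof (intro conjI exI[of _ F])
    show "path_prob_measure T M" by (rule M)
    show "distr M borel (\<lambda>\<Theta>. apply_bcontfun \<Theta> 0) = init_measure L \<mu>0b"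
      using distM unfolding ev0_def \<nu>_def .
    show "AE \<Theta> in M. \<forall>t\<in>{0..T}. \<forall>i. (blk i = 0 \<or> blk i = L) \<longrightarrow> apply_bcontfun \<Theta> t $ i = apply_bcontfun \<Theta> 0 $ i"
      using C3M
    proof eventually_elim
      case (elim \<Theta>) then show ?case unfolding C3_def by blast
    qed
    show "AE \<Theta> in M. \<forall>l\<le>L. \<forall>s\<in>{0..T}. \<forall>t\<in>{0..T}.
        norm (bproj (blockset blk l) (apply_bcontfun \<Theta> t - apply_bcontfun \<Theta> s)) \<le> R * \<bar>t - s\<bar>"
      using C4M
    proof eventually_elim
      case (elim \<Theta>) then show ?case unfolding C4_def by blast
    qed
    show "special_function T L blk R F" by (rule Fsp)
    show "AE \<Theta> in M. \<forall>t\<in>{0..T}. bproj (blockset blk (L - 1)) (apply_bcontfun \<Theta> t) =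
        bproj (blockset blk (L - 1)) (F (apply_bcontfun \<Theta> 0) t)"
      using specM unfolding Q_def ev0_def .
  qed
qed

end
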